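(* Let $G$ be a connected graph of order $n$, maximum degree $\Delta$, and diameter $d$. Then: (i) $\gamma_{e,f}^*(G)\ge \frac{d+3}{6}$; (ii) if $\Delta=3$, then $\gamma_{e,f}^*(G)\ge \frac{n}{2+3d}$; (iii) if $\Delta\ge 4$, then $\gamma_{e,f}^*(G)\ge \left(\dfrac{\frac{\Delta-1}{2}-1}{\Delta\left(\frac{\Delta-1}{2}\right)^d-3}\right)n$.
   Context: All graphs are finite, simple and undirected. The fractional porous exponential domination number $\gamma_{e,f}^*(G)$ is the optimum value of the linear program: minimize $\sum_{u\in V(G)}x(u)$ subject to $\sum_{u\in V(G)}\left(\frac12\right)^{\mathrm{dist}_G(u,v)-1}x(u)\ge 1$ for every $v\in V(G)$ and $x(u)\ge 0$ for every $u\in V(G)$, where $\mathrm{dist}_G$ is the usual graph distance. *)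

theory Defs
  imports Complex_Main
begin

definition simple_graph :: "'a set \<Rightarrow> ('a \<Rightarrow> 'a \<Rightarrow> bool) \<Rightarrow> bool" where
  "simple_graph V E \<longleftrightarrow> finite V \<and> (\<forall>u v. E u v \<longrightarrow> u \<in> V \<and> v \<in> V)
     \<and> (\<forall>u v. E u v \<longrightarrow> E v u) \<and> (\<forall>u. \<not> E u u)"

definition is_walk :: "'a set \<Rightarrow> ('a \<Rightarrow> 'a \<Rightarrow> bool) \<Rightarrow> 'a list \<Rightarrow> bool" where
  "is_walk V E p \<longleftrightarrow> p \<noteq> [] \<and> set p \<subseteq> V \<and> (\<forall>i. Suc i < length p \<longrightarrow> E (p ! i) (p ! Suc i))"

definition connected_graph :: "'a set \<Rightarrow> ('a \<Rightarrow> 'a \<Rightarrow> bool) \<Rightarrow> bool" where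
  "connected_graph V E \<longleftrightarrow> simple_graph V E \<and> V \<noteq> {} \<and>
     (\<forall>u\<in>V. \<forall>v\<in>V. \<exists>p. is_walk V E p \<and> hd p = u \<and> last p = v)"

definition gdist :: "'a set \<Rightarrow> ('a \<Rightarrow> 'a \<Rightarrow> bool) \<Rightarrow> 'a \<Rightarrow> 'a \<Rightarrow> nat" where
  "gdist V E u v = (LEAST k. \<exists>p. is_walk V E p \<and> hd p = u \<and> last p = v \<and> length p = Suc k)"

definition diameter :: "'a set \<Rightarrow> ('a \<Rightarrow> 'a \<Rightarrow> bool) \<Rightarrow> nat" where
  "diameter V E = Max {gdist V E u v | u v. u \<in> V \<and> v \<in> V}"

definition degree :: "'a set \<Rightarrow> ('a \<Rightarrow> 'a \<Rightarrow> bool) \<Rightarrow> 'a \<Rightarrow> nat" where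
  "degree V E u = card {v \<in> V. E u v}"

definition max_degree :: "'a set \<Rightarrow> ('a \<Rightarrow> 'a \<Rightarrow> bool) \<Rightarrow> nat" where
  "max_degree V E = Max (degree V E ` V)"

definition fped_feasible :: "'a set \<Rightarrow> ('a \<Rightarrow> 'a \<Rightarrow> bool) \<Rightarrow> ('a \<Rightarrow> real) \<Rightarrow> bool" where
  "fped_feasible V E x \<longleftrightarrow> (\<forall>u\<in>V. x u \<ge> 0) \<and>
     (\<forall>v\<in>V. (\<Sum>u\<in>V. (1/2::real) powi (int (gdist V E u v) - 1) * x u) \<ge> 1)"

definition frac_porous_exp_dom :: "'a set \<Rightarrow> ('a \<Rightarrow> 'a \<Rightarrow> bool) \<Rightarrow> real" where
  "frac_porous_exp_dom V E = Inf {(\<Sum>u\<in>V. x u) | x. fped_feasible V E x}"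

end

theory Submission
  imports Defs
begin

lemma w_eq: "(1/2::real) powi (int k - 1) = 2 * (1/2) ^ k"
proof (cases k)
  case 0 then show ?thesis by simp
next
  case (Suc m)
  have "int k - 1 = int m" using Suc by simp
  then show ?thesis using Suc by (simp add: power_int_of_nat)
qed

lemma walk_single: "u \<in> V \<Longrightarrow> is_walk V E [u]"
  by (simp add: is_walk_def)

lemma gdist_le:
  assumes "is_walk V E p" "hd p = u" "last p = v"
  shows "gdist V E u v \<le> length p - 1"
proof -
  have "p \<noteq> []" using assms(1) by (simp add: is_walk_def)
  then have "length p = Suc (length p - 1)" by simp
  then show ?thesis unfolding gdist_def using assms by (intro Least_le) blast
qed

lemma gdist_ex:
  assumes "connected_graph V E" "u \<in> V" "v \<in> V"
  shows "\<exists>p. is_walk V E p \<and> hd p = u \<and> last p = v \<and> length p = Suc (gdist V E u v)"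
proof -
  obtain p where p: "is_walk V E p" "hd p = u" "last p = v"
    using assms unfolding connected_graph_def by blast
  have "p \<noteq> []" using p(1) by (simp add: is_walk_def)
  then have "\<exists>k p. is_walk V E p \<and> hd p = u \<and> last p = v \<and> length p = Suc k"
    using p by (intro exI[of _ "length p - 1"] exI[of _ p]) simp
  then show ?thesis unfolding gdist_def by (rule LeastI_ex)
qed

lemma gdist_refl: "u \<in> V \<Longrightarrow> gdist V E u u = 0"
  using gdist_le[of V E "[u]" u u] walk_single[of u V E] by simp

lemma gdist_zero:
  assumes "connected_graph V E" "u \<in> V" "v \<in> V" "gdist V E u v = 0"
  shows "u = v"
proof -
  obtain p where p: "is_walk V E p" "hd p = u" "last p = v" "length p = 1"
    using gdist_ex[OF assms(1-3)] assms(4) by auto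
  then obtain a where "p = [a]" by (metis One_nat_def length_0_conv length_Suc_conv)
  then show ?thesis using p by simp
qed

lemma walk_snoc:
  assumes "is_walk V E p" "E (last p) w" "w \<in> V"
  shows "is_walk V E (p @ [w])"
proof -
  have ne: "p \<noteq> []" using assms(1) by (simp add: is_walk_def)
  show ?thesis unfolding is_walk_def
  proof (intro conjI allI impI)
    show "p @ [w] \<noteq> []" by simp
    show "set (p @ [w]) \<subseteq> V" using assms by (auto simp: is_walk_def)
  next
    fix i assume i: "Suc i < length (p @ [w])"
    show "E ((p @ [w]) ! i) ((p @ [w]) ! Suc i)"
    proof (cases "Suc i < length p")
      case True
      then show ?thesis using assms(1) by (simp add: is_walk_def nth_append)
    next
      case False
      then have "Suc i = length p" using i by simp
      then have "i = length p - 1" by simp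
      then have "p ! i = last p" using ne by (simp add: last_conv_nth)
      then show ?thesis using assms(2) \<open>Suc i = length p\<close> by (simp add: nth_append)
    qed
  qed
qed

lemma gdist_step:
  assumes "connected_graph V E" "u \<in> V" "v \<in> V" "E v w"
  shows "gdist V E u w \<le> gdist V E u v + 1"
proof -
  obtain p where p: "is_walk V E p" "hd p = u" "last p = v" "length p = Suc (gdist V E u v)"
    using gdist_ex[OF assms(1-3)] by blast
  have wV: "w \<in> V" using assms(1,4) by (auto simp: connected_graph_def simple_graph_def)
  have "is_walk V E (p @ [w])" using walk_snoc[OF p(1) _ wV] p(3) assms(4) by simp
  moreover have "hd (p @ [w]) = u" using p by (cases p) (auto simp: is_walk_def)
  ultimately have "gdist V E u w \<le> length (p @ [w]) - 1" using gdist_le by fastforce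
  then show ?thesis using p(4) by simp
qed

lemma gdist_pred:
  assumes "connected_graph V E" "u \<in> V" "v \<in> V" "gdist V E u v = Suc k"
  shows "\<exists>w\<in>V. E w v \<and> gdist V E u w = k"
proof -
  obtain p where p: "is_walk V E p" "hd p = u" "last p = v" "length p = Suc (Suc k)"
    using gdist_ex[OF assms(1-3)] assms(4) by auto
  define q where "q = take (Suc k) p"
  have q: "is_walk V E q" using p unfolding q_def is_walk_def
    by (auto dest: in_set_takeD)
  have hq: "hd q = u" using p unfolding q_def by (cases p) auto
  have lq: "last q = p ! k" using p unfolding q_def by (subst last_conv_nth) auto
  have e: "E (p ! k) v" using p by (auto simp: is_walk_def last_conv_nth)
  have wV: "p ! k \<in> V" using p by (auto simp: is_walk_def)
  have le: "gdist V E u (p ! k) \<le> k" using gdist_le[OF q hq lq] unfolding q_def using p by simp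
  have "Suc k \<le> gdist V E u (p ! k) + 1" using gdist_step[OF assms(1,2) wV e] assms(4) by simp
  then show ?thesis using le wV e by (intro bexI[of _ "p ! k"]) auto
qed

lemma edge_in: "connected_graph V E \<Longrightarrow> E a b \<Longrightarrow> a \<in> V \<and> b \<in> V"
  by (auto simp: connected_graph_def simple_graph_def)

lemma edge_sym: "connected_graph V E \<Longrightarrow> E a b \<Longrightarrow> E b a"
  by (auto simp: connected_graph_def simple_graph_def)

lemma gdist_tri:
  assumes "connected_graph V E" "u \<in> V" "v \<in> V" "w \<in> V"
  shows "gdist V E u w \<le> gdist V E u v + gdist V E v w"
  using assms(4)
proof (induction "gdist V E v w" arbitrary: w)
  case 0
  then have "v = w" using gdist_zero[OF assms(1,3)] by metis
  then show ?case by simp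
next
  case (Suc k)
  obtain w' where w': "w' \<in> V" "E w' w" "gdist V E v w' = k"
    using gdist_pred[OF assms(1,3) Suc.prems] Suc.hyps(2) by metis
  have "gdist V E u w' \<le> gdist V E u v + k" using Suc.hyps(1)[of w'] w' by simp
  moreover have "gdist V E u w \<le> gdist V E u w' + 1" using gdist_step[OF assms(1,2) w'(1,2)] .
  ultimately show ?case using Suc.hyps(2) by simp
qed

lemma gdist_sym_le:
  assumes "connected_graph V E" "u \<in> V" "v \<in> V"
  shows "gdist V E v u \<le> gdist V E u v"
  using assms(3)
proof (induction "gdist V E u v" arbitrary: v)
  case 0
  then have "u = v" using gdist_zero[OF assms(1,2)] by metis
  then show ?case by simp
next
  case (Suc k)
  obtain w where w: "w \<in> V" "E w v" "gdist V E u w = k"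
    using gdist_pred[OF assms(1,2) Suc.prems] Suc.hyps(2) by metis
  have "gdist V E w u \<le> k" using Suc.hyps(1)[of w] w by simp
  moreover have "gdist V E v w \<le> 1"
    using gdist_step[OF assms(1) Suc.prems Suc.prems edge_sym[OF assms(1) w(2)]]
      gdist_refl[OF Suc.prems, of E] by simp
  moreover have "gdist V E v u \<le> gdist V E v w + gdist V E w u"
    using gdist_tri[OF assms(1) Suc.prems w(1) assms(2)] .
  ultimately show ?case using Suc.hyps(2) by simp
qed

lemma gdist_sym:
  assumes "connected_graph V E" "u \<in> V" "v \<in> V"
  shows "gdist V E v u = gdist V E u v"
  using gdist_sym_le[OF assms] gdist_sym_le[OF assms(1,3,2)] by simp

lemma feasible_one:
  assumes "connected_graph V E"
  shows "fped_feasible V E (\<lambda>_. 1)"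
  unfolding fped_feasible_def
proof (intro conjI ballI)
  fix v assume v: "v \<in> V"
  have fin: "finite V" using assms by (simp add: connected_graph_def simple_graph_def)
  have "(1/2::real) powi (int (gdist V E v v) - 1) * 1 \<le> (\<Sum>u\<in>V. (1/2::real) powi (int (gdist V E u v) - 1) * 1)"
    by (rule member_le_sum[OF v _ fin]) (simp add: w_eq)
  then show "1 \<le> (\<Sum>u\<in>V. (1/2::real) powi (int (gdist V E u v) - 1) * 1)"
    using gdist_refl[OF v, of E] by (simp add: w_eq)
qed simp

lemma lower_bound_Inf:
  assumes "connected_graph V E"
    and "\<And>x. fped_feasible V E x \<Longrightarrow> L \<le> (\<Sum>u\<in>V. x u)"
  shows "L \<le> frac_porous_exp_dom V E"
  unfolding frac_porous_exp_dom_def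
  apply (rule cInf_greatest)
  using feasible_one[OF assms(1)] assms(2) by auto

lemma dual_bound:
  assumes "connected_graph V E" "fped_feasible V E x" "finite I"
    and p: "\<And>i. i \<in> I \<Longrightarrow> p i \<in> V"
    and c: "\<And>i. i \<in> I \<Longrightarrow> c i \<ge> 0"
    and dual: "\<And>u. u \<in> V \<Longrightarrow> (\<Sum>i\<in>I. c i * (2 * (1/2::real) ^ gdist V E u (p i))) \<le> 1"
  shows "(\<Sum>i\<in>I. c i) \<le> (\<Sum>u\<in>V. x u)"
proof -
  have x0: "\<And>u. u \<in> V \<Longrightarrow> x u \<ge> 0" using assms(2) by (simp add: fped_feasible_def)
  have cons: "\<And>v. v \<in> V \<Longrightarrow> 1 \<le> (\<Sum>u\<in>V. 2 * (1/2::real) ^ gdist V E u v * x u)"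
    using assms(2) by (simp add: fped_feasible_def w_eq)
  have "(\<Sum>i\<in>I. c i) \<le> (\<Sum>i\<in>I. c i * (\<Sum>u\<in>V. 2 * (1/2::real) ^ gdist V E u (p i) * x u))"
    by (rule sum_mono) (use c cons p in \<open>metis mult.right_neutral mult_left_mono\<close>)
  also have "\<dots> = (\<Sum>u\<in>V. x u * (\<Sum>i\<in>I. c i * (2 * (1/2::real) ^ gdist V E u (p i))))"
    by (simp add: sum_distrib_left sum_distrib_right sum.swap[of _ I V] mult_ac)
  also have "\<dots> \<le> (\<Sum>u\<in>V. x u)"
    by (rule sum_mono) (use x0 dual in \<open>metis mult.right_neutral mult_left_mono\<close>)
  finally show ?thesis .
qed

definition dd :: "nat \<Rightarrow> nat \<Rightarrow> nat" where
  "dd i j = (if i \<le> j then j - i else i - j)"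

lemma helly1:
  fixes f :: "nat \<Rightarrow> nat"
  assumes "\<And>i j. i \<le> d \<Longrightarrow> j \<le> d \<Longrightarrow> dd i j \<le> f i + f j"
  shows "\<exists>j\<le>d. \<forall>i\<le>d. dd i j \<le> f i"
proof -
  define L where "L = Max ((\<lambda>i. int i - int (f i)) ` {0..d})"
  define R where "R = Min ((\<lambda>i. int i + int (f i)) ` {0..d})"
  obtain a where a: "a \<le> d" "L = int a - int (f a)"
    unfolding L_def by (metis (no_types, lifting) Max_in atLeastAtMost_iff empty_iff finite_atLeastAtMost finite_imageI image_iff image_is_empty le0 order_refl)
  obtain b where b: "b \<le> d" "R = int b + int (f b)"
    unfolding R_def by (metis (no_types, lifting) Min_in atLeastAtMost_iff empty_iff finite_atLeastAtMost finite_imageI image_iff image_is_empty le0 order_refl)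
  have LR: "L \<le> R" using assms[OF a(1) b(1)] a b unfolding dd_def by (auto split: if_splits)
  have Li: "\<And>i. i \<le> d \<Longrightarrow> int i - int (f i) \<le> L" unfolding L_def by (intro Max_ge) auto
  have Ri: "\<And>i. i \<le> d \<Longrightarrow> R \<le> int i + int (f i)" unfolding R_def by (intro Min_le) auto
  have Ld: "L \<le> int d" using a by simp
  have R0: "0 \<le> R" using b by simp
  define j where "j = nat (max L 0)"
  have "j \<le> d" using Ld unfolding j_def by simp
  moreover have "\<forall>i\<le>d. dd i j \<le> f i"
  proof (intro allI impI)
    fix i assume i: "i \<le> d"
    have "L \<le> int j" "int j \<le> R" using LR R0 unfolding j_def by auto
    then show "dd i j \<le> f i" using Li[OF i] Ri[OF i] unfolding dd_def by (auto split: if_splits)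
  qed
  ultimately show ?thesis by blast
qed

lemma sum_left: "(\<Sum>i<j. (1/2::real) ^ (j - i)) = 1 - (1/2) ^ j"
proof (induction j)
  case 0 then show ?case by simp
next
  case (Suc j)
  have "(\<Sum>i<Suc j. (1/2::real) ^ (Suc j - i)) = (\<Sum>i<j. (1/2::real) ^ (Suc j - i)) + 1/2"
    by simp
  also have "(\<Sum>i<j. (1/2::real) ^ (Suc j - i)) = (1/2) * (\<Sum>i<j. (1/2::real) ^ (j - i))"
    by (simp add: sum_distrib_left Suc_diff_le less_imp_le)
  finally show ?case using Suc.IH by simp
qed

lemma sum_right: "(\<Sum>i\<in>{j..j+m}. (1/2::real) ^ (i - j)) = 2 - (1/2) ^ m"
proof (induction m)
  case 0 then show ?case by simp
next
  case (Suc m)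
  have "{j..j + Suc m} = insert (j + Suc m) {j..j+m}" by auto
  then have "(\<Sum>i\<in>{j..j+Suc m}. (1/2::real) ^ (i - j)) = (1/2)^(Suc m) + (\<Sum>i\<in>{j..j+m}. (1/2::real) ^ (i - j))"
    by simp
  then show ?case using Suc.IH by simp
qed

lemma exact3:
  assumes "j \<le> d"
  shows "(\<Sum>i\<in>{0..d}. (1/2::real) ^ dd i j) + (1/2) ^ dd 0 j + (1/2) ^ dd d j = 3"
proof -
  have split: "{0..d} = {..<j} \<union> {j..j+(d-j)}" using assms by auto
  have "(\<Sum>i\<in>{0..d}. (1/2::real) ^ dd i j) = (\<Sum>i<j. (1/2::real) ^ dd i j) + (\<Sum>i\<in>{j..j+(d-j)}. (1/2::real) ^ dd i j)"
    unfolding split by (rule sum.union_disjoint) auto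
  also have "(\<Sum>i<j. (1/2::real) ^ dd i j) = (\<Sum>i<j. (1/2::real) ^ (j - i))"
    by (rule sum.cong) (auto simp: dd_def)
  also have "(\<Sum>i\<in>{j..j+(d-j)}. (1/2::real) ^ dd i j) = (\<Sum>i\<in>{j..j+(d-j)}. (1/2::real) ^ (i - j))"
    by (rule sum.cong) (auto simp: dd_def)
  also have "\<dots> = 2 - (1/2)^(d-j)" by (rule sum_right)
  finally show ?thesis using assms by (simp add: sum_left dd_def)
qed

lemma bound3:
  fixes f :: "nat \<Rightarrow> nat"
  assumes "\<And>i j. i \<le> d \<Longrightarrow> j \<le> d \<Longrightarrow> dd i j \<le> f i + f j"
  shows "(\<Sum>i\<in>{0..d}. (1/2::real) ^ f i) + (1/2) ^ f 0 + (1/2) ^ f d \<le> 3"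
proof -
  obtain j where j: "j \<le> d" "\<And>i. i \<le> d \<Longrightarrow> dd i j \<le> f i" using helly1[OF assms] by blast
  have "(\<Sum>i\<in>{0..d}. (1/2::real) ^ f i) \<le> (\<Sum>i\<in>{0..d}. (1/2::real) ^ dd i j)"
    by (rule sum_mono) (auto intro: power_decreasing j(2))
  moreover have "(1/2::real) ^ f 0 \<le> (1/2) ^ dd 0 j" by (auto intro: power_decreasing j(2))
  moreover have "(1/2::real) ^ f d \<le> (1/2) ^ dd d j" by (auto intro: power_decreasing j(2))
  ultimately show ?thesis using exact3[OF j(1)] by linarith
qed

lemma finV: "connected_graph V E \<Longrightarrow> finite V"
  by (simp add: connected_graph_def simple_graph_def)

lemma diam_props:
  assumes "connected_graph V E"
  shows "\<And>u v. u \<in> V \<Longrightarrow> v \<in> V \<Longrightarrow> gdist V E u v \<le> diameter V E"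
    and "\<exists>a\<in>V. \<exists>b\<in>V. gdist V E a b = diameter V E"
proof -
  have eq: "{gdist V E u v | u v. u \<in> V \<and> v \<in> V} = (\<lambda>(u,v). gdist V E u v) ` (V \<times> V)" by auto
  have fin: "finite {gdist V E u v | u v. u \<in> V \<and> v \<in> V}" unfolding eq using finV[OF assms] by simp
  have ne: "{gdist V E u v | u v. u \<in> V \<and> v \<in> V} \<noteq> {}" using assms unfolding connected_graph_def by blast
  show "\<And>u v. u \<in> V \<Longrightarrow> v \<in> V \<Longrightarrow> gdist V E u v \<le> diameter V E"
    unfolding diameter_def using fin by (intro Max_ge) auto
  show "\<exists>a\<in>V. \<exists>b\<in>V. gdist V E a b = diameter V E"
    using Max_in[OF fin ne] unfolding diameter_def by (smt (verit, best) mem_Collect_eq)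
qed

lemma part1:
  assumes conn: "connected_graph V E"
  shows "(real (diameter V E) + 3) / 6 \<le> frac_porous_exp_dom V E"
proof -
  define d where "d = diameter V E"
  obtain a b where ab: "a \<in> V" "b \<in> V" "gdist V E a b = d" using diam_props(2)[OF conn] d_def by blast
  obtain p where p: "is_walk V E p" "hd p = a" "last p = b" "length p = Suc d"
    using gdist_ex[OF conn ab(1,2)] ab(3) by blast
  define P where "P i = p ! i" for i
  have PV: "\<And>i. i \<le> d \<Longrightarrow> P i \<in> V" using p unfolding P_def is_walk_def by (auto simp: subset_iff)
  have P0: "P 0 = a" using p unfolding P_def by (cases p) auto
  have Pd: "P d = b" using p unfolding P_def by (metis diff_Suc_1 last_conv_nth list.size(3) nat.simps(3))
  have PE: "\<And>i. i < d \<Longrightarrow> E (P i) (P (Suc i))" using p unfolding P_def is_walk_def by auto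
  have up: "gdist V E (P i) (P (i + k)) \<le> k" if "i + k \<le> d" for i k
    using that
  proof (induction k)
    case 0 then show ?case using gdist_refl[OF PV[of i]] by simp
  next
    case (Suc k)
    have "gdist V E (P i) (P (Suc (i + k))) \<le> gdist V E (P i) (P (i+k)) + 1"
      using gdist_step[OF conn PV PV PE] Suc.prems by simp
    then show ?case using Suc by simp
  qed
  have low: "k \<le> gdist V E (P i) (P (i + k))" if "i + k \<le> d" for i k
  proof -
    have "d \<le> gdist V E a (P i) + gdist V E (P i) (P (i+k)) + gdist V E (P (i+k)) b"
      using gdist_tri[OF conn ab(1) PV[of i] ab(2)] gdist_tri[OF conn PV[of i] PV[of "i+k"] ab(2)] ab(3) that
      by simp
    moreover have "gdist V E a (P i) \<le> i" using up[of 0 i] that P0 by simp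
    moreover have "gdist V E (P (i+k)) b \<le> d - (i+k)" using up[of "i+k" "d-(i+k)"] that Pd by simp
    ultimately show ?thesis using that by linarith
  qed
  have ddP: "dd i j \<le> gdist V E (P i) (P j)" if "i \<le> d" "j \<le> d" for i j
  proof (cases "i \<le> j")
    case True
    then show ?thesis using low[of i "j - i"] that unfolding dd_def by simp
  next
    case False
    then have "dd i j \<le> gdist V E (P j) (P i)" using low[of j "i - j"] that unfolding dd_def by simp
    then show ?thesis using gdist_sym[OF conn PV[OF that(1)] PV[OF that(2)]] by simp
  qed
  define c where "c i = (1 + (if i = 0 then 1 else 0) + (if i = d then 1 else 0)) / (6::real)" for i
  have csum: "(\<Sum>i\<in>{0..d}. c i) = (real d + 3) / 6"
  proof -
    have "(\<Sum>i\<in>{0..d}. c i) = (\<Sum>i\<in>{0..d}. 1/6 + (if i = 0 then 1/6 else 0) + (if i = d then 1/6 else (0::real)))"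
      unfolding c_def by (rule sum.cong) auto
    also have "\<dots> = (real d + 1)/6 + 1/6 + 1/6" by (simp add: sum.distrib)
    finally show ?thesis by simp
  qed
  show ?thesis unfolding d_def[symmetric]
  proof (rule lower_bound_Inf[OF conn])
    fix x assume x: "fped_feasible V E x"
    have "(\<Sum>i\<in>{0..d}. c i) \<le> (\<Sum>u\<in>V. x u)"
    proof (rule dual_bound[OF conn x])
      show "\<And>i. i \<in> {0..d} \<Longrightarrow> P i \<in> V" using PV by simp
      show "\<And>i. i \<in> {0..d} \<Longrightarrow> 0 \<le> c i" unfolding c_def by simp
    next
      fix u assume u: "u \<in> V"
      define f where "f i = gdist V E u (P i)" for i
      have fb: "dd i j \<le> f i + f j" if "i \<le> d" "j \<le> d" for i j
        using ddP[OF that] gdist_tri[OF conn PV[OF that(1)] u PV[OF that(2)]]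
          gdist_sym[OF conn u PV[OF that(1)]] unfolding f_def by simp
      have "(\<Sum>i\<in>{0..d}. c i * (2 * (1/2::real) ^ gdist V E u (P i)))
          = (\<Sum>i\<in>{0..d}. (1/2::real) ^ f i / 3 + (if i = 0 then (1/2::real) ^ f i / 3 else 0)
              + (if i = d then (1/2::real) ^ f i / 3 else 0))"
        unfolding c_def f_def by (rule sum.cong) (auto simp: field_simps)
      also have "\<dots> = ((\<Sum>i\<in>{0..d}. (1/2::real) ^ f i) + (1/2) ^ f 0 + (1/2) ^ f d) / 3"
        by (simp add: sum.distrib sum_divide_distrib[symmetric])
      also have "\<dots> \<le> 1" using bound3[of d f] fb by simp
      finally show "(\<Sum>i\<in>{0..d}. c i * (2 * (1/2::real) ^ gdist V E u (P i))) \<le> 1" .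
    qed simp
    then show "(real d + 3) / 6 \<le> (\<Sum>u\<in>V. x u)" using csum by simp
  qed
qed

lemma deg_le:
  assumes "connected_graph V E" "w \<in> V"
  shows "card {v \<in> V. E w v} \<le> max_degree V E"
  unfolding max_degree_def degree_def using finV[OF assms(1)] assms(2)
  by (intro Max_ge) auto

lemma sphere_bound:
  assumes conn: "connected_graph V E" and u: "u \<in> V"
  shows "card {v \<in> V. gdist V E u v = Suc k} \<le> max_degree V E * (max_degree V E - 1) ^ k"
proof (induction k)
  case 0
  have "{v \<in> V. gdist V E u v = Suc 0} \<subseteq> {v \<in> V. E u v}"
  proof
    fix v assume v: "v \<in> {v \<in> V. gdist V E u v = Suc 0}"
    then obtain w where w: "w \<in> V" "E w v" "gdist V E u w = 0" using gdist_pred[OF conn u] by blast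
    then have "w = u" using gdist_zero[OF conn u w(1)] by simp
    then show "v \<in> {v \<in> V. E u v}" using v w by simp
  qed
  then have "card {v \<in> V. gdist V E u v = Suc 0} \<le> card {v \<in> V. E u v}"
    by (rule card_mono[rotated]) (simp add: finV[OF conn])
  then show ?case using deg_le[OF conn u] by simp
next
  case (Suc k)
  define S where "S j = {v \<in> V. gdist V E u v = j}" for j
  define N where "N w = {v \<in> V. E w v}" for w
  have fS: "finite (S j)" for j using finV[OF conn] unfolding S_def by simp
  have sub: "S (Suc (Suc k)) \<subseteq> (\<Union>w\<in>S (Suc k). N w \<inter> S (Suc (Suc k)))"
  proof
    fix v assume v: "v \<in> S (Suc (Suc k))"
    then obtain w where w: "w \<in> V" "E w v" "gdist V E u w = Suc k" using gdist_pred[OF conn u] unfolding S_def by blast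
    then show "v \<in> (\<Union>w\<in>S (Suc k). N w \<inter> S (Suc (Suc k)))" using v unfolding S_def N_def by auto
  qed
  have each: "card (N w \<inter> S (Suc (Suc k))) \<le> max_degree V E - 1" if w: "w \<in> S (Suc k)" for w
  proof -
    have wV: "w \<in> V" using w unfolding S_def by simp
    obtain z where z: "z \<in> V" "E z w" "gdist V E u z = k" using gdist_pred[OF conn u wV] w unfolding S_def by auto
    have "N w \<inter> S (Suc (Suc k)) \<subseteq> N w - {z}" using z unfolding S_def by auto
    then have "card (N w \<inter> S (Suc (Suc k))) \<le> card (N w - {z})"
      by (rule card_mono[rotated]) (simp add: finV[OF conn] N_def)
    also have "\<dots> = card (N w) - 1" using z edge_sym[OF conn z(2)] unfolding N_def by simp
    also have "\<dots> \<le> max_degree V E - 1" using deg_le[OF conn wV] unfolding N_def by simp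
    finally show ?thesis .
  qed
  have "card (S (Suc (Suc k))) \<le> card (\<Union>w\<in>S (Suc k). N w \<inter> S (Suc (Suc k)))"
    by (rule card_mono[OF _ sub]) (simp add: fS)
  also have "\<dots> \<le> (\<Sum>w\<in>S (Suc k). card (N w \<inter> S (Suc (Suc k))))" by (rule card_UN_le[OF fS])
  also have "\<dots> \<le> (\<Sum>w\<in>S (Suc k). max_degree V E - 1)" by (rule sum_mono) (rule each)
  also have "\<dots> = card (S (Suc k)) * (max_degree V E - 1)" by simp
  also have "\<dots> \<le> max_degree V E * (max_degree V E - 1) ^ k * (max_degree V E - 1)"
    using Suc.IH unfolding S_def by (rule mult_right_mono) simp
  finally show ?case unfolding S_def by (simp add: mult_ac)
qed

lemma ball_sum:
  assumes conn: "connected_graph V E" and u: "u \<in> V" and D: "max_degree V E \<ge> 1"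
  shows "(\<Sum>v\<in>V. 2 * (1/2::real) ^ gdist V E u v)
     \<le> 2 + real (max_degree V E) * (\<Sum>k<diameter V E. ((real (max_degree V E) - 1) / 2) ^ k)"
proof -
  define d where "d = diameter V E"
  define D where "D = max_degree V E"
  define S where "S j = {v \<in> V. gdist V E u v = j}" for j
  have fin: "finite V" using finV[OF conn] .
  have img: "(gdist V E u) ` V \<subseteq> {..<Suc d}" using diam_props(1)[OF conn u] unfolding d_def by (auto simp: less_Suc_eq_le)
  have "(\<Sum>v\<in>V. 2 * (1/2::real) ^ gdist V E u v) = (\<Sum>k\<in>{..<Suc d}. \<Sum>v\<in>S k. 2 * (1/2::real) ^ gdist V E u v)"
    unfolding S_def by (rule sum.group[OF fin _ img, symmetric]) simp
  also have "\<dots> = (\<Sum>k\<in>{..<Suc d}. real (card (S k)) * (2 * (1/2::real) ^ k))"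
    by (rule sum.cong) (auto simp: S_def)
  also have "\<dots> = real (card (S 0)) * 2 + (\<Sum>k<d. real (card (S (Suc k))) * (2 * (1/2::real) ^ Suc k))"
    using sum.lessThan_Suc_shift[of "\<lambda>k. real (card (S k)) * (2 * (1/2::real) ^ k)" d] by simp
  also have "\<dots> \<le> 2 + (\<Sum>k<d. real D * ((real D - 1) / 2) ^ k)"
  proof (rule add_mono)
    have "S 0 \<subseteq> {u}" unfolding S_def using gdist_zero[OF conn u] by auto
    then have "card (S 0) \<le> 1" using card_mono[of "{u}" "S 0"] by simp
    then show "real (card (S 0)) * 2 \<le> 2" by simp
  next
    show "(\<Sum>k<d. real (card (S (Suc k))) * (2 * (1/2::real) ^ Suc k)) \<le> (\<Sum>k<d. real D * ((real D - 1) / 2) ^ k)"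
    proof (rule sum_mono)
      fix k
      have c: "card (S (Suc k)) \<le> D * (D - 1) ^ k" using sphere_bound[OF conn u] unfolding S_def D_def .
      have e: "real (D - 1) = real D - 1" using D unfolding D_def by (simp add: of_nat_diff)
      have "real (card (S (Suc k))) \<le> real (D * (D - 1) ^ k)"
        using c by (rule of_nat_mono)
      also have "\<dots> = real D * (real D - 1) ^ k" by (simp only: of_nat_mult of_nat_power e)
      finally have "real (card (S (Suc k))) \<le> real D * (real D - 1) ^ k" .
      then have that_ineq: "real (card (S (Suc k))) * (1/2::real) ^ k \<le> real D * (real D - 1) ^ k * (1/2) ^ k"
        by (rule mult_right_mono) simp
      then show "real (card (S (Suc k))) * (2 * (1/2::real) ^ Suc k) \<le> real D * ((real D - 1) / 2) ^ k"
      proof -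
        have "((real D - 1) / 2) ^ k = (real D - 1) ^ k * (1/2) ^ k"
          by (simp add: power_mult_distrib[symmetric])
        moreover have "(2 * (1/2::real) ^ Suc k) = (1/2) ^ k" by simp
        ultimately show ?thesis using that_ineq by simp
      qed
    qed
  qed
  also have "\<dots> = 2 + real D * (\<Sum>k<d. ((real D - 1) / 2) ^ k)" by (simp add: sum_distrib_left)
  finally show ?thesis unfolding d_def D_def .
qed

lemma part23:
  assumes conn: "connected_graph V E" and D: "max_degree V E \<ge> 1"
  defines "B \<equiv> 2 + real (max_degree V E) * (\<Sum>k<diameter V E. ((real (max_degree V E) - 1) / 2) ^ k)"
  shows "real (card V) / B \<le> frac_porous_exp_dom V E"
proof (rule lower_bound_Inf[OF conn])
  have "0 \<le> (\<Sum>k<diameter V E. ((real (max_degree V E) - 1) / 2) ^ k)"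
    by (intro sum_nonneg) (use D in simp)
  then have B2: "B \<ge> 2" unfolding B_def by simp
  fix x assume x: "fped_feasible V E x"
  have "(\<Sum>v\<in>V. 1 / B) \<le> (\<Sum>u\<in>V. x u)"
  proof (rule dual_bound[OF conn x finV[OF conn], of id])
    fix u assume u: "u \<in> V"
    have "(\<Sum>i\<in>V. 1 / B * (2 * (1 / 2) ^ gdist V E u (id i))) = (\<Sum>v\<in>V. 2 * (1/2::real) ^ gdist V E u v) / B"
      by (simp add: sum_divide_distrib)
    also have "\<dots> \<le> B / B" using ball_sum[OF conn u D] B2 unfolding B_def by (intro divide_right_mono) auto
    also have "\<dots> = 1" using B2 by simp
    finally show "(\<Sum>i\<in>V. 1 / B * (2 * (1 / 2) ^ gdist V E u (id i))) \<le> 1" .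
  qed (use B2 in auto)
  then show "real (card V) / B \<le> (\<Sum>u\<in>V. x u)" by simp
qed

theorem mainTheorem6:
  fixes V :: "'a set" and E :: "'a \<Rightarrow> 'a \<Rightarrow> bool" and n \<Delta> d :: nat
  assumes "connected_graph V E"
    and "n = card V" and "\<Delta> = max_degree V E" and "d = diameter V E"
  shows "frac_porous_exp_dom V E \<ge> (real d + 3) / 6
    \<and> (\<Delta> = 3 \<longrightarrow> frac_porous_exp_dom V E \<ge> real n / (2 + 3 * real d))
    \<and> (\<Delta> \<ge> 4 \<longrightarrow> frac_porous_exp_dom V E \<ge>
          (((real \<Delta> - 1) / 2 - 1) / (real \<Delta> * ((real \<Delta> - 1) / 2) ^ d - 3)) * real n)"
proof -
  have p1: "frac_porous_exp_dom V E \<ge> (real d + 3) / 6" using part1[OF assms(1)] assms(4) by simp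
  have p2: "\<Delta> = 3 \<longrightarrow> frac_porous_exp_dom V E \<ge> real n / (2 + 3 * real d)"
  proof
    assume h: "\<Delta> = 3"
    have "real n / (2 + real \<Delta> * (\<Sum>k<d. ((real \<Delta> - 1) / 2) ^ k)) \<le> frac_porous_exp_dom V E"
      using part23[OF assms(1)] h assms(2-4) by simp
    then show "frac_porous_exp_dom V E \<ge> real n / (2 + 3 * real d)" using h by simp
  qed
  have p3: "\<Delta> \<ge> 4 \<longrightarrow> frac_porous_exp_dom V E \<ge>
          (((real \<Delta> - 1) / 2 - 1) / (real \<Delta> * ((real \<Delta> - 1) / 2) ^ d - 3)) * real n"
  proof
    assume h: "\<Delta> \<ge> 4"
    define r where "r = (real \<Delta> - 1) / 2"
    define B where "B = 2 + real \<Delta> * (\<Sum>k<d. r ^ k)"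
    have lb: "real n / B \<le> frac_porous_exp_dom V E"
      using part23[OF assms(1)] h assms(2-4) unfolding B_def r_def by simp
    have r1: "r - 1 > 0" using h unfolding r_def by simp
    have geo: "(r - 1) * (\<Sum>k<d. r ^ k) = r ^ d - 1" by (simp add: power_diff_1_eq)
    have "(r - 1) * B = real \<Delta> * r ^ d - 3"
    proof -
      have "(r - 1) * B = 2 * (r - 1) + real \<Delta> * ((r - 1) * (\<Sum>k<d. r ^ k))"
        unfolding B_def by (simp add: algebra_simps)
      also have "\<dots> = 2 * (r - 1) + real \<Delta> * (r ^ d - 1)" using geo by simp
      also have "\<dots> = real \<Delta> * r ^ d - 3" unfolding r_def by (simp add: field_simps)
      finally show ?thesis .
    qed
    then have "(r - 1) / (real \<Delta> * r ^ d - 3) * real n = real n / B"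
      using r1 by (metis (no_types, lifting) div_by_0 mult.commute mult_1 nonzero_divide_mult_cancel_left order_less_irrefl times_divide_eq_left times_divide_eq_right)
    then show "frac_porous_exp_dom V E \<ge>
          (((real \<Delta> - 1) / 2 - 1) / (real \<Delta> * ((real \<Delta> - 1) / 2) ^ d - 3)) * real n"
      using lb unfolding r_def by simp
  qed
  show ?thesis using p1 p2 p3 by blast
qed

end
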